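(* Let $k\ge n\ge 3$, and let $\pi$ assign to each $n$-element subset $S\subseteq[k]$ a string $\pi(S)$ of length $n$ that is an ordering of the elements of $S$, such that $d(\pi(S),\pi(S'))\le 3$ for all $n$-element subsets $S,S'\subseteq[k]$ with $|S\oplus S'|=2$. Then every set $R\subseteq[k]$ with $|R|=n-1$ satisfies at least one of: (1) there exists $A_R\subseteq R$ with $|A_R|=n-3$ such that $R$ freezes $A_R$; or (2) $R$ is semi-frozen.
   Context: $[k]=\{1,\dots,k\}$; $d$ is Hamming distance; $\pi(S)[i]$ is the letter at position $i\in[n]$ of $\pi(S)$; $\oplus$ is symmetric difference of sets. For a set $R\subseteq[k]$, $\mathcal U_R$ is the set of all sets $S\subseteq[k]$ with $R\subset S$ and $|S|=|R|+1$. For $|R|=n-1$ and $A_R\subseteq R$, $R$ freezes $A_R$ (with freezing function $g_R$) if there is a one-to-one map $g_R:A_R\to[n]$ such that $\pi(S)[g_R(a)]=a$ for all $a\in A_R$ and all $S\in\mathcal U_R$. A set $R$ with $|R|=n-1$ is semi-frozen with semi-freezing function $h_R$ and wildcard index $w_R$ if $h_R:R\to[n]$ is one-to-one, $w_R$ is the unique index of $[n]$ not in the image of $h_R$, and for every $r\in R$ and every $S\in\mathcal U_R$, either $\pi(S)[h_R(r)]=r$ or $\pi(S)[w_R]=r$. *)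

theory Defs
  imports Main
begin

text \<open>Strings of length n are lists; position i of [n] is list index i - 1,
  so positions are represented 0-based as {..<n}.\<close>

definition hamming :: "nat list \<Rightarrow> nat list \<Rightarrow> nat" where
  "hamming xs ys = card {i. i < length xs \<and> i < length ys \<and> xs ! i \<noteq> ys ! i}"

definition symdiff :: "'a set \<Rightarrow> 'a set \<Rightarrow> 'a set" where
  "symdiff A B = (A - B) \<union> (B - A)"

definition upsets :: "nat \<Rightarrow> nat set \<Rightarrow> nat set set" where
  "upsets k R = {S. S \<subseteq> {1..k} \<and> R \<subset> S \<and> card S = card R + 1}"

definition freezes :: "(nat set \<Rightarrow> nat list) \<Rightarrow> nat \<Rightarrow> nat \<Rightarrow> nat set \<Rightarrow> nat set \<Rightarrow> bool" where
  "freezes \<pi> k n R A \<longleftrightarrow>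
     (\<exists>g. inj_on g A \<and> g ` A \<subseteq> {..<n} \<and>
          (\<forall>a\<in>A. \<forall>S\<in>upsets k R. \<pi> S ! g a = a))"

definition semi_frozen :: "(nat set \<Rightarrow> nat list) \<Rightarrow> nat \<Rightarrow> nat \<Rightarrow> nat set \<Rightarrow> bool" where
  "semi_frozen \<pi> k n R \<longleftrightarrow>
     (\<exists>h w. inj_on h R \<and> h ` R \<subseteq> {..<n} \<and> w < n \<and> w \<notin> h ` R \<and>
          {..<n} - h ` R = {w} \<and>
          (\<forall>r\<in>R. \<forall>S\<in>upsets k R. \<pi> S ! h r = r \<or> \<pi> S ! w = r))"

end

theory Submission
  imports Defs
begin


definition dset :: "'a set \<Rightarrow> ('a \<Rightarrow> nat) \<Rightarrow> ('a \<Rightarrow> nat) \<Rightarrow> 'a set" where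
  "dset R f g = {r\<in>R. f r \<noteq> g r}"

lemma dset_sym: "dset R f g = dset R g f" by (auto simp: dset_def)
lemma dset_fin: "finite R \<Longrightarrow> finite (dset R f g)" by (simp add: dset_def)

lemma one_out:
  assumes "finite R" "x \<in> R" "x \<notin> dset R h f" "\<forall>r\<in>R-{x}. g r = h r" "g x \<noteq> h x"
    "card (dset R f g) \<le> 2"
  shows "card (dset R h f) \<le> 1"
proof -
  have sub: "insert x (dset R h f) \<subseteq> dset R f g" using assms(2-5) by (force simp: dset_def)
  have "card (insert x (dset R h f)) \<le> card (dset R f g)"
    by (rule card_mono[OF dset_fin[OF assms(1)] sub])
  moreover have "card (insert x (dset R h f)) = card (dset R h f) + 1"
    using assms(3) dset_fin[OF assms(1)] by simp
  ultimately show ?thesis using assms(6) by linarith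
qed

lemma three_in:
  assumes "finite R" "x \<in> dset R h f" "y \<in> dset R h f" "z \<in> dset R h f" "distinct [x,y,z]"
    "\<forall>r\<in>R-{x}. g r = h r" "card (dset R f g) \<le> 2"
  shows "f x = g x"
proof (rule ccontr)
  assume "f x \<noteq> g x"
  then have "{x,y,z} \<subseteq> dset R f g" using assms(2-6) by (auto simp: dset_def)
  then have "card {x,y,z} \<le> card (dset R f g)" by (rule card_mono[OF dset_fin[OF assms(1)]])
  moreover have "card {x,y,z} = 3" using assms(5) by simp
  ultimately show False using assms(7) by simp
qed

lemma outside_img:
  assumes "inj_on g R" "x \<in> R" "\<forall>r\<in>R-{x}. g r = h r" "g x \<noteq> h x"
  shows "g x \<notin> h ` R"
proof
  assume "g x \<in> h ` R"
  then obtain r where r: "r \<in> R" "g x = h r" by auto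
  show False
  proof (cases "r = x")
    case True then show False using r assms(4) by simp
  next
    case False
    then have "g r = h r" using assms(3) r by auto
    then have "g x = g r" using r by simp
    then show False using assms(1,2) r(1) False by (auto dest: inj_onD)
  qed
qed

lemma compl_single:
  assumes "finite R" "card R + 1 = n" "inj_on h R" "h ` R \<subseteq> {..<n}"
  shows "\<exists>w. {..<n} - h ` R = {w}"
proof -
  have "card ({..<n} - h ` R) = n - card R"
    using assms by (simp add: card_Diff_subset card_image)
  also have "\<dots> = Suc 0" using assms(2) by simp
  finally show ?thesis by (simp add: card_1_singleton_iff)
qed

lemma center:
  assumes fin: "finite R" and cR: "card R + 1 = n" and hi: "inj_on h R" "h ` R \<subseteq> {..<n}"
    and x: "x1 \<in> R" "x2 \<in> R" "x3 \<in> R" "distinct [x1,x2,x3]"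
    and g1: "inj_on g1 R" "g1 ` R \<subseteq> {..<n}" "\<forall>r\<in>R-{x1}. g1 r = h r" "g1 x1 \<noteq> h x1"
    and g2: "inj_on g2 R" "g2 ` R \<subseteq> {..<n}" "\<forall>r\<in>R-{x2}. g2 r = h r" "g2 x2 \<noteq> h x2"
    and g3: "inj_on g3 R" "g3 ` R \<subseteq> {..<n}" "\<forall>r\<in>R-{x3}. g3 r = h r" "g3 x3 \<noteq> h x3"
    and f: "inj_on f R" "card (dset R f g1) \<le> 2" "card (dset R f g2) \<le> 2" "card (dset R f g3) \<le> 2"
  shows "card (dset R h f) \<le> 1"
proof (cases "x1 \<in> dset R h f \<and> x2 \<in> dset R h f \<and> x3 \<in> dset R h f")
  case True
  have e1: "f x1 = g1 x1" by (rule three_in[where y=x2 and z=x3]) (use fin g1(3) f(2) True x(4) in auto)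
  have e2: "f x2 = g2 x2" by (rule three_in[where y=x1 and z=x3]) (use fin g2(3) f(3) True x(4) in auto)
  obtain w where w: "{..<n} - h ` R = {w}" using compl_single[OF fin cR hi] by blast
  have "g1 x1 \<in> {..<n} - h ` R" using outside_img[OF g1(1) x(1) g1(3,4)] g1(2) x(1) by auto
  moreover have "g2 x2 \<in> {..<n} - h ` R" using outside_img[OF g2(1) x(2) g2(3,4)] g2(2) x(2) by auto
  ultimately have "f x1 = f x2" using w e1 e2 by auto
  then have "x1 = x2" using f(1) x by (auto dest: inj_onD)
  then show ?thesis using x(4) by simp
next
  case False
  then show ?thesis
    using one_out[OF fin x(1) _ g1(3,4) f(2)] one_out[OF fin x(2) _ g2(3,4) f(3)]
      one_out[OF fin x(3) _ g3(3,4) f(4)] by blast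
qed

lemma half:
  fixes F :: "('a \<Rightarrow> nat) set"
  assumes fin: "finite R" and cR: "card R + 1 = n"
    and inj: "\<And>f. f \<in> F \<Longrightarrow> inj_on f R \<and> f ` R \<subseteq> {..<n}"
    and dist: "\<And>f g. f \<in> F \<Longrightarrow> g \<in> F \<Longrightarrow> card (dset R f g) \<le> 2"
    and F: "f0 \<in> F" "f1 \<in> F" "f3 \<in> F"
    and abc: "a \<in> R" "b \<in> R" "c \<in> R" "a \<noteq> b" "c \<noteq> a" "c \<noteq> b"
    and h: "f0 b \<noteq> f1 b" "f0 a \<noteq> f1 a" "\<forall>r\<in>R-{a,b}. f1 r = f0 r" "f3 c \<noteq> f0 c"
      "f3 a = f0 a" "f3 b = f1 b"
  shows "\<exists>h. inj_on h R \<and> h ` R \<subseteq> {..<n} \<and> (\<forall>f\<in>F. card (dset R h f) \<le> 1)"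
proof -
  define h where "h = f0(b := f1 b)"
  have sub: "{b,c} \<subseteq> dset R f0 f3" using abc h by (auto simp: dset_def)
  have d03: "{b,c} = dset R f0 f3"
    by (rule card_seteq[OF dset_fin[OF fin] sub]) (use dist[OF F(1,3)] abc in auto)
  have h3: "\<forall>r\<in>R-{c}. f3 r = h r"
  proof
    fix r assume r: "r \<in> R - {c}"
    show "f3 r = h r"
    proof (cases "r = b")
      case True then show ?thesis using h by (simp add: h_def)
    next
      case False
      then have "r \<notin> dset R f0 f3" using d03 r by auto
      then show ?thesis using r False by (auto simp: dset_def h_def)
    qed
  qed
  have h3c: "f3 c \<noteq> h c" using h abc by (simp add: h_def)
  have h0: "\<forall>r\<in>R-{b}. f0 r = h r" "f0 b \<noteq> h b" using h by (auto simp: h_def)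
  have h1: "\<forall>r\<in>R-{a}. f1 r = h r" "f1 a \<noteq> h a" using h abc by (auto simp: h_def)
  have i0: "inj_on f0 R" "f0 ` R \<subseteq> {..<n}" using inj[OF F(1)] by auto
  have i1: "inj_on f1 R" "f1 ` R \<subseteq> {..<n}" using inj[OF F(2)] by auto
  have i3: "inj_on f3 R" "f3 ` R \<subseteq> {..<n}" using inj[OF F(3)] by auto
  have key: "f1 b \<noteq> f0 s" if s: "s \<in> R" "s \<noteq> b" for s
  proof
    assume eq: "f1 b = f0 s"
    show False
    proof (cases "s = a")
      case True
      then have "f3 a = f3 b" using eq h by simp
      then show False using i3(1) abc by (auto dest: inj_onD)
    next
      case False
      then have "f1 s = f0 s" using h(3) s by auto
      then have "f1 b = f1 s" using eq by simp
      then show False using i1(1) abc s by (auto dest: inj_onD)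
    qed
  qed
  have hinj: "inj_on h R"
  proof (rule inj_onI)
    fix r s assume rs: "r \<in> R" "s \<in> R" "h r = h s"
    show "r = s"
    proof (cases "r = b"; cases "s = b")
      assume "r = b" "s \<noteq> b" then show ?thesis using key[of s] rs by (simp add: h_def)
    next
      assume "r \<noteq> b" "s = b" then show ?thesis using key[of r] rs by (simp add: h_def)
    next
      assume "r \<noteq> b" "s \<noteq> b" then show ?thesis using rs i0(1) by (auto simp: h_def dest: inj_onD)
    qed simp
  qed
  have himg: "h ` R \<subseteq> {..<n}" using i0 i1 abc by (auto simp: h_def)
  have "\<forall>f\<in>F. card (dset R h f) \<le> 1"
  proof
    fix f assume fF: "f \<in> F"
    show "card (dset R h f) \<le> 1"
      by (rule center[OF fin cR hinj himg abc(2,1,3) _ i0 h0 i1 h1 i3 h3 h3c])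
         (use abc inj[OF fF] dist[OF fF F(1)] dist[OF fF F(2)] dist[OF fF F(3)] in auto)
  qed
  then show ?thesis using hinj himg by blast
qed

lemma core:
  fixes F :: "('a \<Rightarrow> nat) set"
  assumes fin: "finite R" and cR: "card R + 1 = n"
    and inj: "\<And>f. f \<in> F \<Longrightarrow> inj_on f R \<and> f ` R \<subseteq> {..<n}"
    and dist: "\<And>f g. f \<in> F \<Longrightarrow> g \<in> F \<Longrightarrow> card (dset R f g) \<le> 2"
    and f0: "f0 \<in> F"
  shows "(\<exists>B. B \<subseteq> R \<and> card B \<le> 2 \<and> (\<forall>f\<in>F. \<forall>r\<in>R-B. f r = f0 r)) \<or>
         (\<exists>h. inj_on h R \<and> h ` R \<subseteq> {..<n} \<and> (\<forall>f\<in>F. card (dset R h f) \<le> 1))"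
proof (cases "\<forall>f\<in>F. card (dset R f0 f) \<le> 1")
  case True then show ?thesis using inj[OF f0] by (intro disjI2 exI[of _ f0]) auto
next
  case False
  then obtain f1 where f1: "f1 \<in> F" "\<not> card (dset R f0 f1) \<le> 1" by auto
  with dist[OF f0 f1(1)] have "card (dset R f0 f1) = 2" by linarith
  then obtain a b where ab: "dset R f0 f1 = {a,b}" "a \<noteq> b" by (auto simp: card_2_iff)
  have abR: "a \<in> R" "b \<in> R" "f0 a \<noteq> f1 a" "f0 b \<noteq> f1 b" "\<forall>r\<in>R-{a,b}. f1 r = f0 r"
  proof -
    have m: "a \<in> dset R f0 f1" "b \<in> dset R f0 f1" using ab(1) by auto
    then show "a \<in> R" "b \<in> R" "f0 a \<noteq> f1 a" "f0 b \<noteq> f1 b" by (auto simp: dset_def)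
    show "\<forall>r\<in>R-{a,b}. f1 r = f0 r"
    proof
      fix r assume "r \<in> R-{a,b}"
      then have "r \<notin> dset R f0 f1" using ab(1) by auto
      then show "f1 r = f0 r" using \<open>r \<in> R-{a,b}\<close> by (auto simp: dset_def)
    qed
  qed
  show ?thesis
  proof (cases "\<forall>f\<in>F. \<forall>r\<in>R-{a,b}. f r = f0 r")
    case True
    then show ?thesis using abR by (intro disjI1 exI[of _ "{a,b}"]) (auto simp: card_insert_if)
  next
    case False
    then obtain f3 c where f3: "f3 \<in> F" "c \<in> R" "c \<noteq> a" "c \<noteq> b" "f3 c \<noteq> f0 c" by auto
    have f1c: "f1 c = f0 c" using abR f3 by auto
    have A: "f3 a = f0 a \<or> f3 b = f0 b"
    proof (rule ccontr)
      assume "\<not> ?thesis"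
      then have "{a,b,c} \<subseteq> dset R f0 f3" using abR f3 by (auto simp: dset_def)
      then have "card {a,b,c} \<le> card (dset R f0 f3)" by (rule card_mono[OF dset_fin[OF fin]])
      then show False using dist[OF f0 f3(1)] ab(2) f3 by simp
    qed
    have B: "f3 a = f1 a \<or> f3 b = f1 b"
    proof (rule ccontr)
      assume "\<not> ?thesis"
      then have "{a,b,c} \<subseteq> dset R f1 f3" using abR f3 f1c by (auto simp: dset_def)
      then have "card {a,b,c} \<le> card (dset R f1 f3)" by (rule card_mono[OF dset_fin[OF fin]])
      then show False using dist[OF f1(1) f3(1)] ab(2) f3 by simp
    qed
    have "(f3 a = f0 a \<and> f3 b = f1 b) \<or> (f3 b = f0 b \<and> f3 a = f1 a)"
      using A B abR by auto
    then show ?thesis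
    proof
      assume c1: "f3 a = f0 a \<and> f3 b = f1 b"
      show ?thesis
        by (rule disjI2, rule half[OF fin cR inj dist f0 f1(1) f3(1) abR(1,2) f3(2) ab(2) f3(3,4)])
           (use abR f3 c1 in auto)
    next
      assume c2: "f3 b = f0 b \<and> f3 a = f1 a"
      show ?thesis
        by (rule disjI2, rule half[OF fin cR inj dist f0 f1(1) f3(1) abR(2,1) f3(2) ab(2)[symmetric] f3(4,3)])
           (use abR f3 c2 in auto)
    qed
  qed
qed



theorem lemma3p5:
  fixes k n :: nat and \<pi> :: "nat set \<Rightarrow> nat list"
  assumes "3 \<le> n" and "n \<le> k"
    and perm: "\<And>S. S \<subseteq> {1..k} \<Longrightarrow> card S = n \<Longrightarrow>
                 length (\<pi> S) = n \<and> distinct (\<pi> S) \<and> set (\<pi> S) = S"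
    and adj: "\<And>S S'. S \<subseteq> {1..k} \<Longrightarrow> card S = n \<Longrightarrow> S' \<subseteq> {1..k} \<Longrightarrow> card S' = n \<Longrightarrow>
                 card (symdiff S S') = 2 \<Longrightarrow> hamming (\<pi> S) (\<pi> S') \<le> 3"
  shows "\<forall>R. R \<subseteq> {1..k} \<and> card R = n - 1 \<longrightarrow>
           (\<exists>A. A \<subseteq> R \<and> card A = n - 3 \<and> freezes \<pi> k n R A) \<or> semi_frozen \<pi> k n R"
proof (intro allI impI)
  fix R assume R: "R \<subseteq> {1..k} \<and> card R = n - 1"
  have finR: "finite R" using R finite_subset[of R "{1..k}"] by simp
  have cR: "card R + 1 = n" using R assms(1) by simp
  define U where "U = upsets k R"
  define pos where "pos S r = (THE i. i < length (\<pi> S) \<and> \<pi> S ! i = r)" for S r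
  have U: "S \<subseteq> {1..k} \<and> card S = n \<and> R \<subset> S" if "S \<in> U" for S
    using that cR unfolding U_def upsets_def by simp
  have P: "length (\<pi> S) = n \<and> distinct (\<pi> S) \<and> set (\<pi> S) = S" if "S \<in> U" for S
  proof -
    have "S \<subseteq> {1..k}" "card S = n" using U[OF that] by (blast, blast)
    then show ?thesis by (rule perm)
  qed
  have pos: "pos S r < n \<and> \<pi> S ! pos S r = r" if "S \<in> U" "r \<in> S" for S r
  proof -
    have "\<exists>!i. i < length (\<pi> S) \<and> \<pi> S ! i = r" using distinct_Ex1[of "\<pi> S" r] P[OF that(1)] that(2) by simp
    from theI'[OF this] show ?thesis using P[OF that(1)] by (simp add: pos_def)
  qed
  have pos_eq: "pos S r = i" if "S \<in> U" "i < n" "\<pi> S ! i = r" for S r i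
  proof -
    have "\<exists>!i. i < length (\<pi> S) \<and> \<pi> S ! i = r"
      using distinct_Ex1[of "\<pi> S" r] P[OF that(1)] that(2,3) nth_mem[of i "\<pi> S"] by simp
    then show ?thesis unfolding pos_def using that P[OF that(1)] by (auto intro: the1_equality)
  qed
  have posinj: "inj_on (pos S) S" if "S \<in> U" for S
    by (rule inj_onI) (metis pos[OF that])
  have ins: "\<exists>x. x \<notin> R \<and> S = insert x R" if "S \<in> U" for S
  proof -
    have "card (S - R) = 1" using U[OF that] finR cR
      by (simp add: card_Diff_subset less_imp_le) 
    then obtain x where "S - R = {x}" by (auto simp: card_1_singleton_iff)
    then show ?thesis using U[OF that] by blast
  qed
  define F where "F = pos ` U"
  have Finj: "inj_on f R \<and> f ` R \<subseteq> {..<n}" if fF: "f \<in> F" for f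
  proof -
    obtain S where S: "S \<in> U" "f = pos S" using fF F_def by auto
    then show ?thesis using posinj[OF S(1)] U[OF S(1)] pos[OF S(1)]
      by (auto intro: inj_on_subset)
  qed
  have Fdist: "card (dset R f g) \<le> 2" if fF: "f \<in> F" and gF: "g \<in> F" for f g
  proof -
    obtain S where S: "S \<in> U" "f = pos S" using fF F_def by auto
    obtain S' where S': "S' \<in> U" "g = pos S'" using gF F_def by auto
    show ?thesis
    proof (cases "S = S'")
      case True then show ?thesis using S S' by (simp add: dset_def)
    next
      case False
      obtain x where x: "x \<notin> R" "S = insert x R" using ins[OF S(1)] by blast
      obtain x' where x': "x' \<notin> R" "S' = insert x' R" using ins[OF S'(1)] by blast
      have xx: "x \<noteq> x'" using False x x' by auto
      have "symdiff S S' = {x, x'}" using x x' xx by (auto simp: symdiff_def)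
      then have "card (symdiff S S') = 2" using xx by simp
      then have ham: "hamming (\<pi> S) (\<pi> S') \<le> 3" using adj U[OF S(1)] U[OF S'(1)] by blast
      define Mis where "Mis = {i. i < length (\<pi> S) \<and> i < length (\<pi> S') \<and> \<pi> S ! i \<noteq> \<pi> S' ! i}"
      have cM: "card Mis \<le> 3" using ham by (simp add: hamming_def Mis_def)
      have finM: "finite Mis" by (simp add: Mis_def)
      define D where "D = dset R f g"
      have DR: "D \<subseteq> R" by (auto simp: D_def dset_def)
      have sub: "pos S ` insert x D \<subseteq> Mis"
      proof
        fix i assume "i \<in> pos S ` insert x D"
        then obtain r where r: "r \<in> insert x D" "i = pos S r" by auto
        have rS: "r \<in> S" using r DR x by auto
        have pi: "i < n" "\<pi> S ! i = r" using pos[OF S(1) rS] r by auto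
        have "\<pi> S' ! i \<noteq> r"
        proof
          assume eq: "\<pi> S' ! i = r"
          show False
          proof (cases "r = x")
            case True
            have "\<pi> S' ! i \<in> set (\<pi> S')" using P[OF S'(1)] pi nth_mem[of i "\<pi> S'"] by simp
            then show False using eq True P[OF S'(1)] x' x xx by auto
          next
            case False
            then have rD: "r \<in> D" using r by auto
            have "pos S' r = i" using pos_eq[OF S'(1) pi(1) eq] .
            then show False using rD r S S' by (simp add: D_def dset_def)
          qed
        qed
        then show "i \<in> Mis" using pi P[OF S(1)] P[OF S'(1)] by (simp add: Mis_def)
      qed
      have "card (pos S ` insert x D) = card (insert x D)"
        by (rule card_image, rule inj_on_subset[OF posinj[OF S(1)]]) (use DR x in auto)
      also have "\<dots> = card D + 1"
      proof -
        have "finite D" using DR finR finite_subset by blast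
        moreover have "x \<notin> D" using DR x by blast
        ultimately show ?thesis by simp
      qed
      finally have "card D + 1 \<le> card Mis" using card_mono[OF finM sub] by simp
      then show ?thesis using cM D_def by simp
    qed
  qed
  obtain x0 where x0: "x0 \<in> {1..k}" "x0 \<notin> R"
  proof -
    have "card R < card {1..k}" using cR assms(2) by simp
    then have "\<not> {1..k} \<subseteq> R" using card_mono[OF finR] by (meson leD)
    then show ?thesis using that by blast
  qed
  define S0 where "S0 = insert x0 R"
  have S0: "S0 \<in> U" using x0 R finR by (auto simp: U_def upsets_def S0_def)
  have f0: "pos S0 \<in> F" using S0 F_def by auto
  from core[OF finR cR Finj Fdist f0]
  show "(\<exists>A. A \<subseteq> R \<and> card A = n - 3 \<and> freezes \<pi> k n R A) \<or> semi_frozen \<pi> k n R"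
  proof
    assume "\<exists>B. B \<subseteq> R \<and> card B \<le> 2 \<and> (\<forall>f\<in>F. \<forall>r\<in>R-B. f r = pos S0 r)"
    then obtain B where B: "B \<subseteq> R" "card B \<le> 2" "\<forall>f\<in>F. \<forall>r\<in>R-B. f r = pos S0 r" by blast
    have "card (R - B) = card R - card B" using B finR by (simp add: card_Diff_subset finite_subset)
    then have "n - 3 \<le> card (R - B)" using B cR by simp
    then obtain A where A: "A \<subseteq> R - B" "card A = n - 3" by (meson obtain_subset_with_card_n)
    have "freezes \<pi> k n R A"
      unfolding freezes_def
    proof (intro exI[of _ "pos S0"] conjI)
      show "inj_on (pos S0) A" using posinj[OF S0] A by (auto simp: S0_def intro: inj_on_subset)
      show "pos S0 ` A \<subseteq> {..<n}" using pos[OF S0] A by (auto simp: S0_def)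
      show "\<forall>a\<in>A. \<forall>S\<in>upsets k R. \<pi> S ! pos S0 a = a"
      proof (intro ballI)
        fix a S assume a: "a \<in> A" and S: "S \<in> upsets k R"
        then have SU: "S \<in> U" by (simp add: U_def)
        have "pos S a = pos S0 a" using B(3) SU a A F_def by auto
        moreover have "a \<in> S" using U[OF SU] a A by auto
        ultimately show "\<pi> S ! pos S0 a = a" using pos[OF SU] by metis
      qed
    qed
    then show ?thesis using A by blast
  next
    assume "\<exists>h. inj_on h R \<and> h ` R \<subseteq> {..<n} \<and> (\<forall>f\<in>F. card (dset R h f) \<le> 1)"
    then obtain h where h: "inj_on h R" "h ` R \<subseteq> {..<n}" "\<forall>f\<in>F. card (dset R h f) \<le> 1" by blast
    obtain w where w: "{..<n} - h ` R = {w}" using compl_single[OF finR cR h(1,2)] by blast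
    have "semi_frozen \<pi> k n R"
      unfolding semi_frozen_def
    proof (intro exI[of _ h] exI[of _ w] conjI)
      show "inj_on h R" "h ` R \<subseteq> {..<n}" "{..<n} - h ` R = {w}" by fact+
      show "w < n" "w \<notin> h ` R" using w by auto
      show "\<forall>r\<in>R. \<forall>S\<in>upsets k R. \<pi> S ! h r = r \<or> \<pi> S ! w = r"
      proof (intro ballI)
        fix r S assume r: "r \<in> R" and S: "S \<in> upsets k R"
        then have SU: "S \<in> U" by (simp add: U_def)
        have rS: "r \<in> S" using U[OF SU] r by auto
        show "\<pi> S ! h r = r \<or> \<pi> S ! w = r"
        proof (cases "pos S r = h r")
          case True then show ?thesis using pos[OF SU rS] by simp
        next
          case False
          have fF: "pos S \<in> F" using SU F_def by auto
          have rin: "r \<in> dset R h (pos S)" using False r by (auto simp: dset_def)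
          have c1: "card (dset R h (pos S)) \<le> 1" using h(3) fF by blast
          have eq: "\<forall>r'\<in>R-{r}. pos S r' = h r'"
          proof
            fix r' assume r': "r' \<in> R - {r}"
            show "pos S r' = h r'"
            proof (rule ccontr)
              assume "pos S r' \<noteq> h r'"
              then have "{r, r'} \<subseteq> dset R h (pos S)" using rin r' by (auto simp: dset_def)
              then have "card {r, r'} \<le> 1" using c1 card_mono[OF dset_fin[OF finR]] by (meson le_trans)
              then show False using r' by simp
            qed
          qed
          have "pos S r \<notin> h ` R"
            by (rule outside_img) (use Finj[OF fF] r eq False in auto)
          then have "pos S r = w" using w pos[OF SU rS] by blast
          then show ?thesis using pos[OF SU rS] by simp
        qed
      qed
    qed
    then show ?thesis by blast
  qed
qed

end
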